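(* Let $n\ge 1$ and let $G_n$ be the graph consisting of two edges $e_l=(x_1,v_l)$ and $e_r=(x_2,v_r)$ connected by an $H_n$, where $x_1,x_2$ are distinct new vertices not in the $H_n$. Then $G_n$ is $(n+1)$-edge-colorable, but every edge coloring of $G_n$ in which $e_l$ and $e_r$ receive different colors uses at least $n+2$ colors.
   Context: For $n\ge1$, the graph $H_n$ consists of a complete bipartite graph $K_{n,n}$ with bipartition $(L,R)$, $|L|=|R|=n$, together with two further vertices $v_l,v_r$ and the edges $(v_l,v)$ for all $v\in L$ and $(v_r,v)$ for all $v\in R$; $v_l$ is its leftmost vertex and $v_r$ its rightmost vertex. Two edges $(x_1,y_1)$ and $(x_2,y_2)$ are connected by an $H_n$ if $y_1$ is the leftmost and $y_2$ the rightmost vertex of the same copy of $H_n$, and neither $x_1$ nor $x_2$ belongs to that copy. A graph is $k$-edge-colorable if it has a proper edge coloring with at most $k$ colors. *)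

theory Defs
  imports Main
begin

text \<open>Simple graphs are given by their edge sets: an edge is a two-element vertex set.\<close>

definition proper_edge_coloring :: "'v set set \<Rightarrow> ('v set \<Rightarrow> 'c) \<Rightarrow> bool" where
  "proper_edge_coloring E c \<longleftrightarrow>
     (\<forall>e\<in>E. \<forall>f\<in>E. e \<noteq> f \<and> e \<inter> f \<noteq> {} \<longrightarrow> c e \<noteq> c f)"

definition edge_colorable :: "'v set set \<Rightarrow> nat \<Rightarrow> bool" where
  "edge_colorable E k \<longleftrightarrow>
     (\<exists>c :: 'v set \<Rightarrow> nat. proper_edge_coloring E c \<and> card (c ` E) \<le> k)"

text \<open>Vertices of G_n: Lv i, Rv i (i < n) form L and R of K_{n,n};
Vl, Vr are the leftmost/rightmost vertices of H_n; X1, X2 are the new vertices.\<close>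

datatype vert = Lv nat | Rv nat | Vl | Vr | X1 | X2

definition H_edges :: "nat \<Rightarrow> vert set set" where
  "H_edges n =
     {{Lv i, Rv j} | i j. i < n \<and> j < n}
     \<union> {{Vl, Lv i} | i. i < n}
     \<union> {{Vr, Rv j} | j. j < n}"

definition e_l :: "vert set" where "e_l = {X1, Vl}"
definition e_r :: "vert set" where "e_r = {X2, Vr}"

definition G_edges :: "nat \<Rightarrow> vert set set" where
  "G_edges n = H_edges n \<union> {e_l, e_r}"

end

theory Submission
  imports Defs
begin

lemma H_eq: "H_edges n = (\<lambda>(i,j). {Lv i, Rv j}) ` ({..<n}\<times>{..<n}) \<union> (\<lambda>i. {Vl, Lv i}) ` {..<n}
   \<union> (\<lambda>j. {Vr, Rv j}) ` {..<n}"
  unfolding H_edges_def by auto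

lemma fin_G: "finite (G_edges n)"
  unfolding G_edges_def H_eq by auto

lemma a1: "Suc (Suc (i+j)) mod (Suc n) = Suc i \<Longrightarrow> i < n \<Longrightarrow> j < (n::nat) \<Longrightarrow> False"
proof -
  assume h: "Suc (Suc (i+j)) mod (Suc n) = Suc i" "i < n" "j < n"
  show False
  proof (cases "Suc (Suc (i+j)) < Suc n")
    case True then show ?thesis using h by simp
  next
    case False
    then have "Suc (Suc (i+j)) mod Suc n = Suc (Suc (i+j)) - Suc n"
      using h by (simp add: le_mod_geq)
    then show ?thesis using h False by simp
  qed
qed
lemma a2: "Suc (Suc (i+j)) mod (Suc n) = Suc j \<Longrightarrow> i < n \<Longrightarrow> j < (n::nat) \<Longrightarrow> False"
  using a1[of j i n] by (simp add: add.commute)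
lemma a1': "Suc i = Suc (Suc (i+j)) mod (Suc n) \<Longrightarrow> i < n \<Longrightarrow> j < (n::nat) \<Longrightarrow> False"
  using a1 by metis
lemma a2': "Suc j = Suc (Suc (i+j)) mod (Suc n) \<Longrightarrow> i < n \<Longrightarrow> j < (n::nat) \<Longrightarrow> False"
  using a2 by metis
lemma a3: "Suc (Suc (i+j)) mod (Suc n) = Suc (Suc (i+k)) mod (Suc n) \<Longrightarrow> j < n \<Longrightarrow> k < (n::nat) \<Longrightarrow> j = k"
proof -
  assume h: "Suc (Suc (i+j)) mod (Suc n) = Suc (Suc (i+k)) mod (Suc n)" "j < n" "k < n"
  have "((i+2)+j) mod (Suc n) = ((i+2)+k) mod (Suc n)" using h(1) by (simp add: ac_simps)
  then have "j mod Suc n = k mod Suc n" by (simp add: nat_mod_eq_iff)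
  then show ?thesis using h by simp
qed
lemma a4: "Suc (Suc (i+j)) mod (Suc n) = Suc (Suc (k+j)) mod (Suc n) \<Longrightarrow> i < n \<Longrightarrow> k < (n::nat) \<Longrightarrow> i = k"
  using a3[of j i n k] by (simp add: ac_simps)

definition col :: "nat \<Rightarrow> vert set \<Rightarrow> nat" where
  "col n e = (if e = e_l \<or> e = e_r then 0 else if Vl \<in> e then (SOME i. Lv i \<in> e) + 1
     else if Vr \<in> e then (SOME j. Rv j \<in> e) + 1
     else ((SOME i. Lv i \<in> e) + (SOME j. Rv j \<in> e) + 2) mod (Suc n))"

lemma col_K: "col n {Lv i, Rv j} = (i + j + 2) mod (Suc n)"
proof -
  have a: "(SOME k. Lv k \<in> {Lv i, Rv j}) = i" by (rule some_equality) auto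
  have b: "(SOME k. Rv k \<in> {Lv i, Rv j}) = j" by (rule some_equality) auto
  show ?thesis unfolding col_def e_l_def e_r_def using a b by auto
qed

lemma col_L: "col n {Vl, Lv i} = i + 1"
proof -
  have a: "(SOME k. Lv k \<in> {Vl, Lv i}) = i" by (rule some_equality) auto
  show ?thesis unfolding col_def e_l_def e_r_def using a by auto
qed
lemma col_R: "col n {Vr, Rv i} = i + 1"
proof -
  have a: "(SOME k. Rv k \<in> {Vr, Rv i}) = i" by (rule some_equality) auto
  show ?thesis unfolding col_def e_l_def e_r_def using a by auto
qed
lemma col_el: "col n {X1, Vl} = 0" unfolding col_def e_l_def by auto
lemma col_er: "col n {X2, Vr} = 0" unfolding col_def e_r_def by auto

lemma part1:
  assumes "n \<ge> 1"
  shows "edge_colorable (G_edges n) (n + 1)"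
  unfolding edge_colorable_def
proof (intro exI conjI)
  show "proper_edge_coloring (G_edges n) (col n)"
    unfolding proper_edge_coloring_def
  proof (intro ballI impI)
    fix e f assume e: "e \<in> G_edges n" and f: "f \<in> G_edges n" and ef: "e \<noteq> f \<and> e \<inter> f \<noteq> {}"
    from e f ef show "col n e \<noteq> col n f"
      unfolding G_edges_def H_eq
      by (auto simp: col_K col_L col_R col_el col_er e_l_def e_r_def doubleton_eq_iff
          dest: a1 a2 a3 a4 a1' a2')
  qed
  have "col n ` G_edges n \<subseteq> {..n}"
  proof
    fix x assume "x \<in> col n ` G_edges n"
    then obtain e where "e \<in> G_edges n" "x = col n e" by auto
    then show "x \<in> {..n}" using assms
      unfolding G_edges_def H_eq
      by (auto simp: col_K col_L col_R col_el col_er e_l_def e_r_def less_Suc_eq_le[symmetric])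
  qed
  then show "card (col n ` G_edges n) \<le> n + 1"
    using card_mono[OF finite_atMost] by fastforce
qed

lemma inj_star:
  assumes "proper_edge_coloring E c" "S \<subseteq> E" "\<forall>e\<in>S. v \<in> e"
  shows "inj_on c S"
  using assms unfolding proper_edge_coloring_def inj_on_def by blast

lemma all_colors:
  assumes "finite E" "S \<subseteq> E" "inj_on c S" "card (c ` E) \<le> card S"
  shows "c ` S = c ` E"
proof -
  have "c ` S \<subseteq> c ` E" using assms(2) by auto
  moreover have "card (c ` S) = card S" using assms(3) by (simp add: card_image)
  ultimately show ?thesis using assms(1,4)
    by (metis card_seteq finite_imageI)
qed

lemma card_img: "inj_on f A \<Longrightarrow> card (f ` A) = card A" by (simp add: card_image)

lemma part2:
  fixes c :: "vert set \<Rightarrow> 'c"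
  assumes n: "n \<ge> 1" and pc: "proper_edge_coloring (G_edges n) c" and lr: "c e_l \<noteq> c e_r"
  shows "card (c ` G_edges n) \<ge> n + 2"
proof (rule ccontr)
  assume "\<not> ?thesis"
  then have cb: "card (c ` G_edges n) \<le> n + 1" by simp
  define a where "a = c e_l"
  have fin: "finite (G_edges n)" by (rule fin_G)
  have prp: "\<And>e f. e \<in> G_edges n \<Longrightarrow> f \<in> G_edges n \<Longrightarrow> e \<noteq> f \<Longrightarrow> e \<inter> f \<noteq> {} \<Longrightarrow> c e \<noteq> c f"
    using pc unfolding proper_edge_coloring_def by blast
  have inG: "e_l \<in> G_edges n" "e_r \<in> G_edges n" unfolding G_edges_def by auto
  have KG: "\<And>i j. i < n \<Longrightarrow> j < n \<Longrightarrow> {Lv i, Rv j} \<in> G_edges n"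
    unfolding G_edges_def H_edges_def by blast
  have LG: "\<And>i. i < n \<Longrightarrow> {Vl, Lv i} \<in> G_edges n"
    unfolding G_edges_def H_edges_def by blast
  have RG: "\<And>j. j < n \<Longrightarrow> {Vr, Rv j} \<in> G_edges n"
    unfolding G_edges_def H_edges_def by blast
  have aG: "a \<in> c ` G_edges n" using inG a_def by auto
  have ex: "\<exists>j<n. c {Lv i, Rv j} = a" if i: "i < n" for i
  proof -
    define S where "S = insert {Vl, Lv i} ((\<lambda>j. {Lv i, Rv j}) ` {..<n})"
    have SE: "S \<subseteq> G_edges n" using i KG LG unfolding S_def by auto
    have inj: "inj_on (\<lambda>j. {Lv i, Rv j}) {..<n}" by (auto simp: inj_on_def doubleton_eq_iff)
    have cS: "card S = n + 1" unfolding S_def using card_img[OF inj] by (subst card_insert_disjoint) (auto simp: doubleton_eq_iff)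
    have "inj_on c S" by (rule inj_star[OF pc SE, of "Lv i"]) (auto simp: S_def)
    then have "c ` S = c ` G_edges n" using all_colors[OF fin SE] cS cb by simp
    then have "a \<in> c ` S" using aG by simp
    moreover have "c {Vl, Lv i} \<noteq> a" unfolding a_def
      using prp[OF LG[OF i] inG(1)] by (auto simp: e_l_def)
    ultimately show ?thesis unfolding S_def by auto
  qed
  define f where "f i = (SOME j. j < n \<and> c {Lv i, Rv j} = a)" for i
  have f: "f i < n \<and> c {Lv i, Rv (f i)} = a" if "i < n" for i
    unfolding f_def using someI_ex[OF ex[OF that]] by simp
  have finj: "inj_on f {..<n}"
  proof (rule inj_onI)
    fix i k assume ik: "i \<in> {..<n}" "k \<in> {..<n}" "f i = f k"
    show "i = k"
    proof (rule ccontr)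
      assume "i \<noteq> k"
      then have "{Lv i, Rv (f i)} \<noteq> {Lv k, Rv (f k)}" by (auto simp: doubleton_eq_iff)
      moreover have "{Lv i, Rv (f i)} \<inter> {Lv k, Rv (f k)} \<noteq> {}" using ik(3) by auto
      moreover have "c {Lv i, Rv (f i)} = a" "c {Lv k, Rv (f k)} = a" using f[of i] f[of k] ik(1,2) by simp_all
      moreover have "f i < n" "f k < n" using f ik by auto
      ultimately show False using prp[OF KG[of i "f i"] KG[of k "f k"]] ik by auto
    qed
  qed
  have fim: "f ` {..<n} = {..<n}"
  proof (rule card_subset_eq)
    show "f ` {..<n} \<subseteq> {..<n}" using f by auto
    show "card (f ` {..<n}) = card {..<n}" using finj by (simp add: card_image)
  qed simp
  define S where "S = insert e_r ((\<lambda>j. {Vr, Rv j}) ` {..<n})"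
  have SE: "S \<subseteq> G_edges n" using RG inG unfolding S_def by auto
  have inj: "inj_on (\<lambda>j. {Vr, Rv j}) {..<n}" by (auto simp: inj_on_def doubleton_eq_iff)
  have cS: "card S = n + 1" unfolding S_def using card_img[OF inj] by (subst card_insert_disjoint) (auto simp: e_r_def doubleton_eq_iff)
  have "inj_on c S" by (rule inj_star[OF pc SE, of Vr]) (auto simp: S_def e_r_def)
  then have "c ` S = c ` G_edges n" using all_colors[OF fin SE] cS cb by simp
  then have "a \<in> c ` S" using aG by simp
  then obtain j where j: "j < n" "c {Vr, Rv j} = a" using lr unfolding S_def a_def by auto
  then obtain i where i: "i < n" "f i = j" using fim by (metis imageE lessThan_iff)
  have "c {Lv i, Rv j} = a" using f[OF i(1)] i by simp
  moreover have "c {Lv i, Rv j} \<noteq> c {Vr, Rv j}"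
    using prp[OF KG[OF i(1) j(1)] RG[OF j(1)]] by (auto simp: doubleton_eq_iff)
  ultimately show False using j by simp
qed

theorem lemma2:
  fixes n :: nat
  assumes "n \<ge> 1"
  shows "edge_colorable (G_edges n) (n + 1)
    \<and> (\<forall>c :: vert set \<Rightarrow> 'c. proper_edge_coloring (G_edges n) c \<and> c e_l \<noteq> c e_r
          \<longrightarrow> card (c ` G_edges n) \<ge> n + 2)"
  using part1[OF assms] part2[OF assms] by blast

end
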